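(* Let $k\in\mathbb{N}_0\cup\{\infty\}$, let $E,F$ be locally convex super vector spaces, $\mathcal{U}\subseteq\overline{E}^{(k)}$ an open subfunctor and $f\colon\mathcal{U}\to\overline{F}^{(k)}$ a natural transformation such that every $f_\Lambda$ is smooth. Let $\Lambda=\Lambda_n\in\mathbf{Gr}^{(k)}$ and $1\le p\le n$. Let $x\in\mathcal{U}_\Lambda$ be such that no component of $x$ involves $\lambda_p$, i.e. $x\in\overline{E}^{(k)}_{\Delta_p}$ where $\Delta_p$ is the span of all $\lambda_I$ with $p\notin I$, and let $y\in\overline{E}^{(k)}_{\lambda_p\Lambda}$. Then $x+y\in\mathcal{U}_\Lambda$ and $$f_\Lambda(x+y)=f_\Lambda(x)+df_\Lambda(x)(y).$$
   Context: Grassmann algebras $\Lambda_n=\mathbb{R}[\lambda_1,\dots,\lambda_n]$ (anticommuting generators, basis $\lambda_I$, grading by parity of $|I|$), category $\mathbf{Gr}^{(k)}$ of $\Lambda_0,\dots,\Lambda_k$ with parity-preserving unital algebra homomorphisms. For a locally convex super vector space $E=E_0\oplus E_1$: $\overline{E}^{(k)}_\Lambda=(E_0\otimes\Lambda_{\bar 0})\oplus(E_1\otimes\Lambda_{\bar1})$, functorial via $\mathrm{id}\otimes\varrho$; for a linear subspace $\Delta\subseteq\Lambda$, $\overline{E}^{(k)}_\Delta:=(E_0\otimes(\Delta\cap\Lambda_{\bar0}))\oplus(E_1\otimes(\Delta\cap\Lambda_{\bar1}))$. An open subfunctor $\mathcal{U}\subseteq\overline{E}^{(k)}$: open sets $\mathcal{U}_\Lambda$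 stable under all $\overline{E}^{(k)}_\varrho$. Smoothness is Bastiani smoothness. *)

theory Defs
  imports "HOL-Analysis.Analysis" "HOL-Library.Extended_Nat"
begin

instantiation "fun" :: (type, zero) zero
begin
definition zero_fun_def: "(0 :: 'a \<Rightarrow> 'b) = (\<lambda>x. 0)"
instance ..
end

instantiation "fun" :: (type, plus) plus
begin
definition plus_fun_def: "f + g = (\<lambda>x. f x + g x)"
instance ..
end

instantiation "fun" :: (type, real_vector) real_vector
begin
definition scaleR_fun_def: "scaleR c f = (\<lambda>x. scaleR c (f x))"
instance
  by standard (auto simp: plus_fun_def zero_fun_def scaleR_fun_def fun_eq_iff
      algebra_simps scaleR_add_right scaleR_add_left)
end

definition locally_convex :: "'a::{real_vector,t2_space} itself \<Rightarrow> bool" where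
  "locally_convex (T :: 'a itself) \<longleftrightarrow>
     continuous_on UNIV (\<lambda>p::'a \<times> 'a. fst p + snd p) \<and>
     continuous_on UNIV (\<lambda>p::real \<times> 'a. fst p *\<^sub>R snd p) \<and>
     (\<forall>U::'a set. open U \<and> 0 \<in> U \<longrightarrow> (\<exists>V. open V \<and> convex V \<and> 0 \<in> V \<and> V \<subseteq> U))"

text \<open>An element of a Grassmann algebra is given by its coefficient family
  a :: nat set => real w.r.t. the basis lambda_I (I a finite set of generator indices).\<close>

definition gr_alg :: "nat \<Rightarrow> (nat set \<Rightarrow> real) set" where
  "gr_alg n = {a. \<forall>I. a I \<noteq> 0 \<longrightarrow> I \<subseteq> {1..n}}"

definition gr_basis :: "nat set \<Rightarrow> (nat set \<Rightarrow> real)" where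
  "gr_basis I = (\<lambda>J. if J = I then 1 else 0)"

text \<open>lambda_I lambda_J = gr_sign I J lambda_(I union J) for disjoint I, J\<close>
definition gr_sign :: "nat set \<Rightarrow> nat set \<Rightarrow> real" where
  "gr_sign I J = (-1) ^ card {(i, j). i \<in> I \<and> j \<in> J \<and> j < i}"

definition gr_mult :: "(nat set \<Rightarrow> real) \<Rightarrow> (nat set \<Rightarrow> real) \<Rightarrow> (nat set \<Rightarrow> real)" where
  "gr_mult a b = (\<lambda>K. \<Sum>I\<in>Pow K. a I * b (K - I) * gr_sign I (K - I))"

definition gr_even :: "(nat set \<Rightarrow> real) \<Rightarrow> bool" where
  "gr_even a \<longleftrightarrow> (\<forall>I. a I \<noteq> 0 \<longrightarrow> even (card I))"

definition gr_odd :: "(nat set \<Rightarrow> real) \<Rightarrow> bool" where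
  "gr_odd a \<longleftrightarrow> (\<forall>I. a I \<noteq> 0 \<longrightarrow> odd (card I))"

definition gr_morph :: "nat \<Rightarrow> nat \<Rightarrow> ((nat set \<Rightarrow> real) \<Rightarrow> (nat set \<Rightarrow> real)) \<Rightarrow> bool" where
  "gr_morph m n \<rho> \<longleftrightarrow>
     (\<forall>a\<in>gr_alg m. \<rho> a \<in> gr_alg n) \<and>
     (\<forall>a\<in>gr_alg m. \<forall>b\<in>gr_alg m. \<rho> (a + b) = \<rho> a + \<rho> b) \<and>
     (\<forall>a\<in>gr_alg m. \<forall>c::real. \<rho> (c *\<^sub>R a) = c *\<^sub>R \<rho> a) \<and>
     (\<forall>a\<in>gr_alg m. \<forall>b\<in>gr_alg m. \<rho> (gr_mult a b) = gr_mult (\<rho> a) (\<rho> b)) \<and>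
     \<rho> (gr_basis {}) = gr_basis {} \<and>
     (\<forall>a\<in>gr_alg m. gr_even a \<longrightarrow> gr_even (\<rho> a)) \<and>
     (\<forall>a\<in>gr_alg m. gr_odd a \<longrightarrow> gr_odd (\<rho> a))"

text \<open>A super vector space E = E_0 + E_1 is given by two types 'e0, 'e1.
  An element of (E_0 tensor Lambda_even) + (E_1 tensor Lambda_odd) is given by its
  coefficient families (x0, x1) w.r.t. the basis lambda_I.\<close>

type_synonym ('e0, 'e1) sbar = "(nat set \<Rightarrow> 'e0) \<times> (nat set \<Rightarrow> 'e1)"

definition ebar :: "nat \<Rightarrow> ('e0::real_vector, 'e1::real_vector) sbar set" where
  "ebar n = {(x0, x1). \<forall>I. (x0 I \<noteq> 0 \<longrightarrow> I \<subseteq> {1..n} \<and> even (card I)) \<and>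
                            (x1 I \<noteq> 0 \<longrightarrow> I \<subseteq> {1..n} \<and> odd (card I))}"

text \<open>bar E_Delta for a linear subspace Delta of Lambda: the image of
  (E_0 tensor (Delta cap Lambda_even)) + (E_1 tensor (Delta cap Lambda_odd)).\<close>
definition ebar_sub :: "(nat set \<Rightarrow> real) set \<Rightarrow> ('e0::real_vector, 'e1::real_vector) sbar set" where
  "ebar_sub \<Delta> = {(x0, x1).
     (\<exists>(N::nat) d e. (\<forall>i<N. d i \<in> \<Delta> \<and> gr_even (d i)) \<and> x0 = (\<lambda>J. \<Sum>i<N. d i J *\<^sub>R e i)) \<and>
     (\<exists>(N::nat) d e. (\<forall>i<N. d i \<in> \<Delta> \<and> gr_odd (d i)) \<and> x1 = (\<lambda>J. \<Sum>i<N. d i J *\<^sub>R e i))}"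

text \<open>bar E_rho = id tensor rho, for rho : Lambda_m -> Lambda_n.\<close>
definition ebar_map :: "nat \<Rightarrow> ((nat set \<Rightarrow> real) \<Rightarrow> (nat set \<Rightarrow> real)) \<Rightarrow>
    ('e0::real_vector, 'e1::real_vector) sbar \<Rightarrow> ('e0, 'e1) sbar" where
  "ebar_map m \<rho> x = ((\<lambda>J. \<Sum>I\<in>Pow {1..m}. \<rho> (gr_basis I) J *\<^sub>R fst x I),
                      (\<lambda>J. \<Sum>I\<in>Pow {1..m}. \<rho> (gr_basis I) J *\<^sub>R snd x I))"

definition open_subfunctor ::
    "enat \<Rightarrow> (nat \<Rightarrow> ('e0::{real_vector,topological_space}, 'e1::{real_vector,topological_space}) sbar set) \<Rightarrow> bool" where
  "open_subfunctor k U \<longleftrightarrow>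
     (\<forall>n. enat n \<le> k \<longrightarrow> U n \<subseteq> ebar n \<and> openin (top_of_set (ebar n)) (U n)) \<and>
     (\<forall>m n \<rho>. enat m \<le> k \<longrightarrow> enat n \<le> k \<longrightarrow> gr_morph m n \<rho> \<longrightarrow> ebar_map m \<rho> ` U m \<subseteq> U n)"

definition natural_transf ::
    "enat \<Rightarrow> (nat \<Rightarrow> ('e0::real_vector, 'e1::real_vector) sbar set) \<Rightarrow>
     (nat \<Rightarrow> ('e0, 'e1) sbar \<Rightarrow> ('f0::real_vector, 'f1::real_vector) sbar) \<Rightarrow> bool" where
  "natural_transf k U f \<longleftrightarrow>
     (\<forall>n. enat n \<le> k \<longrightarrow> f n ` U n \<subseteq> ebar n) \<and>
     (\<forall>m n \<rho>. enat m \<le> k \<longrightarrow> enat n \<le> k \<longrightarrow> gr_morph m n \<rho> \<longrightarrow>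
        (\<forall>x\<in>U m. f n (ebar_map m \<rho> x) = ebar_map m \<rho> (f m x)))"

definition dir_deriv :: "('v::real_vector \<Rightarrow> 'w::{real_vector,topological_space}) \<Rightarrow> 'v \<Rightarrow> 'v \<Rightarrow> 'w" where
  "dir_deriv f x h = (THE L. ((\<lambda>t. (1 / t) *\<^sub>R (f (x + t *\<^sub>R h) - f x)) \<longlongrightarrow> L) (at (0::real)))"

fun iter_deriv :: "('v::real_vector \<Rightarrow> 'w::{real_vector,topological_space}) \<Rightarrow> nat \<Rightarrow> 'v \<Rightarrow> (nat \<Rightarrow> 'v) \<Rightarrow> 'w" where
  "iter_deriv f 0 x h = f x"
| "iter_deriv f (Suc j) x h = dir_deriv (\<lambda>z. iter_deriv f j z h) x (h j)"

definition dirs :: "'v::real_vector set \<Rightarrow> nat \<Rightarrow> (nat \<Rightarrow> 'v) set" where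
  "dirs V j = {h. (\<forall>i<j. h i \<in> V) \<and> (\<forall>i\<ge>j. h i = 0)}"

definition bastiani_smooth :: "'v::{real_vector,topological_space} set \<Rightarrow> 'v set \<Rightarrow>
    ('v \<Rightarrow> 'w::{real_vector,topological_space}) \<Rightarrow> bool" where
  "bastiani_smooth V U f \<longleftrightarrow> U \<subseteq> V \<and> openin (top_of_set V) U \<and>
     (\<forall>j. (\<forall>x\<in>U. \<forall>h\<in>dirs V (Suc j). \<exists>L.
             ((\<lambda>t. (1 / t) *\<^sub>R (iter_deriv f j (x + t *\<^sub>R h j) h - iter_deriv f j x h)) \<longlongrightarrow> L) (at (0::real))) \<and>
          continuous_on (U \<times> dirs V j) (\<lambda>(x, h). iter_deriv f j x h))"

definition delta_p :: "nat \<Rightarrow> nat \<Rightarrow> (nat set \<Rightarrow> real) set" where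
  "delta_p n p = {a \<in> gr_alg n. \<forall>I. p \<in> I \<longrightarrow> a I = 0}"

definition gen_ideal :: "nat \<Rightarrow> nat \<Rightarrow> (nat set \<Rightarrow> real) set" where
  "gen_ideal n p = {gr_mult (gr_basis {p}) a | a. a \<in> gr_alg n}"

end

theory Submission
  imports Defs
begin

lemma fun_tendsto_unique:
  fixes g :: "'a \<Rightarrow> ('i \<Rightarrow> 'b::t2_space)"
  assumes "(g \<longlongrightarrow> L1) F" "(g \<longlongrightarrow> L2) F" "F \<noteq> bot"
  shows "L1 = L2"
proof
  fix i
  have c: "continuous_on UNIV (\<lambda>x::'i \<Rightarrow> 'b. x i)" by simp
  have "((\<lambda>t. g t i) \<longlongrightarrow> L1 i) F"
    using continuous_on_tendsto_compose[OF c assms(1)] by simp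
  moreover have "((\<lambda>t. g t i) \<longlongrightarrow> L2 i) F"
    using continuous_on_tendsto_compose[OF c assms(2)] by simp
  ultimately show "L1 i = L2 i" using tendsto_unique assms(3) by blast
qed
lemma sbar_tendsto_unique:
  fixes g :: "'a \<Rightarrow> ('i \<Rightarrow> 'b::t2_space) \<times> ('j \<Rightarrow> 'c::t2_space)"
  assumes "(g \<longlongrightarrow> L1) F" "(g \<longlongrightarrow> L2) F" "F \<noteq> bot"
  shows "L1 = L2"
proof (rule prod_eqI)
  show "fst L1 = fst L2" using tendsto_fst[OF assms(1)] tendsto_fst[OF assms(2)] fun_tendsto_unique assms(3) by blast
  show "snd L1 = snd L2" using tendsto_snd[OF assms(1)] tendsto_snd[OF assms(2)] fun_tendsto_unique assms(3) by blast
qed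

definition scl :: "nat \<Rightarrow> real \<Rightarrow> (nat set \<Rightarrow> real) \<Rightarrow> (nat set \<Rightarrow> real)" where
  "scl p t a = (\<lambda>I. if p \<in> I then t * a I else a I)"

lemma scl_mult: "scl p t (gr_mult a b) = gr_mult (scl p t a) (scl p t b)"
proof
  fix K
  have "gr_mult (scl p t a) (scl p t b) K = (\<Sum>I\<in>Pow K. (if p \<in> K then t else 1) * (a I * b (K - I) * gr_sign I (K - I)))"
    unfolding gr_mult_def scl_def by (rule sum.cong) auto
  also have "\<dots> = scl p t (gr_mult a b) K"
    unfolding gr_mult_def scl_def by (simp add: sum_distrib_left)
  finally show "scl p t (gr_mult a b) K = gr_mult (scl p t a) (scl p t b) K" by simp
qed

lemma scl_morph: "gr_morph n n (scl p t)"
  unfolding gr_morph_def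
proof (intro conjI ballI allI impI)
  fix a assume "a \<in> gr_alg n" thus "scl p t a \<in> gr_alg n" by (auto simp: gr_alg_def scl_def)
next
  fix a b show "scl p t (a + b) = scl p t a + scl p t b" by (auto simp: scl_def plus_fun_def algebra_simps)
next
  fix a and c :: real show "scl p t (c *\<^sub>R a) = c *\<^sub>R scl p t a" by (auto simp: scl_def scaleR_fun_def)
next
  fix a b show "scl p t (gr_mult a b) = gr_mult (scl p t a) (scl p t b)" by (rule scl_mult)
next
  show "scl p t (gr_basis {}) = gr_basis {}" by (auto simp: scl_def gr_basis_def)
next
  fix a assume "gr_even a" thus "gr_even (scl p t a)" by (auto simp: gr_even_def scl_def)
next
  fix a assume "gr_odd a" thus "gr_odd (scl p t a)" by (auto simp: gr_odd_def scl_def)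
qed

definition rs :: "nat \<Rightarrow> real \<Rightarrow> (nat set \<Rightarrow> 'a::real_vector) \<Rightarrow> (nat set \<Rightarrow> 'a)" where
  "rs p t g = (\<lambda>J. if p \<in> J then t *\<^sub>R g J else g J)"

lemma sum_scl: 
  assumes "\<forall>J. g J \<noteq> 0 \<longrightarrow> J \<subseteq> {1..n}"
  shows "(\<lambda>J. \<Sum>I\<in>Pow {1..n}. scl p t (gr_basis I) J *\<^sub>R g I) = rs p t g"
proof
  fix J
  have "(\<Sum>I\<in>Pow {1..n}. scl p t (gr_basis I) J *\<^sub>R g I) = (\<Sum>I\<in>Pow {1..n}. if I = J then rs p t g J else 0)"
    by (rule sum.cong) (auto simp: scl_def gr_basis_def rs_def)
  also have "\<dots> = rs p t g J" using assms by (auto simp: rs_def)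
  finally show "(\<Sum>I\<in>Pow {1..n}. scl p t (gr_basis I) J *\<^sub>R g I) = rs p t g J" .
qed

lemma ebar_map_scl:
  assumes "u \<in> ebar n"
  shows "ebar_map n (scl p t) u = (rs p t (fst u), rs p t (snd u))"
proof -
  obtain a b where u: "u = (a, b)" by (cases u)
  have ha: "\<forall>J. a J \<noteq> 0 \<longrightarrow> J \<subseteq> {1..n}" and hb: "\<forall>J. b J \<noteq> 0 \<longrightarrow> J \<subseteq> {1..n}"
    using assms by (auto simp: ebar_def u)
  have "(\<lambda>J. \<Sum>I\<in>Pow {1..n}. scl p t (gr_basis I) J *\<^sub>R a I) = rs p t a"
    by (rule sum_scl[OF ha])
  moreover have "(\<lambda>J. \<Sum>I\<in>Pow {1..n}. scl p t (gr_basis I) J *\<^sub>R b I) = rs p t b"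
    by (rule sum_scl[OF hb])
  ultimately show ?thesis unfolding ebar_map_def u fst_conv snd_conv by simp
qed

lemma nz_lin: "(a::'a::real_vector) + s *\<^sub>R b \<noteq> 0 \<Longrightarrow> a \<noteq> 0 \<or> b \<noteq> 0" by auto

lemma ebar_lin:
  assumes "u \<in> ebar n" "v \<in> ebar n"
  shows "u + s *\<^sub>R v \<in> ebar n"
proof -
  obtain a b where u: "u = (a, b)" by (cases u)
  obtain c d where v: "v = (c, d)" by (cases v)
  show ?thesis using assms unfolding ebar_def u v
    apply (simp add: plus_fun_def scaleR_fun_def)
    by (metis nz_lin)
qed

lemma sum_nz: "(\<lambda>J. \<Sum>i<N. d i J *\<^sub>R (e i::'a::real_vector)) J \<noteq> 0 \<Longrightarrow> \<exists>i<N. d i J \<noteq> 0"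
  by (metis (mono_tags, lifting) lessThan_iff scale_zero_left sum.neutral)

lemma gm_nz:
  assumes "a \<in> gr_alg n" "1 \<le> p" "p \<le> n" "gr_mult (gr_basis {p}) a J \<noteq> 0"
  shows "p \<in> J \<and> J \<subseteq> {1..n}"
proof -
  obtain I where I: "I \<in> Pow J" "gr_basis {p} I * a (J - I) * gr_sign I (J - I) \<noteq> 0"
    using assms(4) unfolding gr_mult_def by (meson sum.not_neutral_contains_not_neutral)
  then have "I = {p}" "a (J - I) \<noteq> 0" by (auto simp: gr_basis_def split: if_splits)
  with I assms(1) have "J - {p} \<subseteq> {1..n}" "p \<in> J" by (auto simp: gr_alg_def)
  with assms(2,3) show ?thesis by auto
qed

lemma lc_line:
  assumes "locally_convex TYPE('a::{real_vector,t2_space})"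
  shows "continuous_on UNIV (\<lambda>t::real. a + t *\<^sub>R (b::'a))"
proof -
  have cp: "continuous_on UNIV (\<lambda>p::'a \<times> 'a. fst p + snd p)"
   and cs: "continuous_on UNIV (\<lambda>p::real \<times> 'a. fst p *\<^sub>R snd p)"
    using assms unfolding locally_convex_def by auto
  have "continuous_on UNIV (\<lambda>t::real. (t, b))" by (intro continuous_intros)
  then have c1: "continuous_on UNIV (\<lambda>t::real. t *\<^sub>R b)"
    using continuous_on_compose2[OF cs] by fastforce
  have "continuous_on UNIV (\<lambda>t::real. (a, t *\<^sub>R b))" by (intro continuous_intros c1)
  then show ?thesis using continuous_on_compose2[OF cp] by fastforce
qed

lemma lc_line_fun:
  assumes "locally_convex TYPE('a::{real_vector,t2_space})"
  shows "continuous_on UNIV (\<lambda>t::real. g + t *\<^sub>R (h::'i \<Rightarrow> 'a))"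
proof (rule continuous_on_coordinatewise_then_product)
  fix i
  show "continuous_on UNIV (\<lambda>t::real. (g + t *\<^sub>R h) i)"
    unfolding plus_fun_def scaleR_fun_def using lc_line[OF assms] by simp
qed

lemma rs_split: "rs p t g = rs p 0 g + t *\<^sub>R (\<lambda>J. if p \<in> J then g J else 0)"
  by (auto simp: rs_def plus_fun_def scaleR_fun_def)

theorem mainTheorem3:
  fixes k :: enat
    and U :: "nat \<Rightarrow> ('e0::{real_vector,t2_space}, 'e1::{real_vector,t2_space}) sbar set"
    and f :: "nat \<Rightarrow> ('e0, 'e1) sbar \<Rightarrow> ('f0::{real_vector,t2_space}, 'f1::{real_vector,t2_space}) sbar"
    and n p :: nat
    and x y :: "('e0, 'e1) sbar"
  assumes "locally_convex TYPE('e0)" and "locally_convex TYPE('e1)"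
    and "locally_convex TYPE('f0)" and "locally_convex TYPE('f1)"
    and "open_subfunctor k U"
    and "natural_transf k U f"
    and "\<And>m. enat m \<le> k \<Longrightarrow> bastiani_smooth (ebar m) (U m) (f m)"
    and "enat n \<le> k"
    and "1 \<le> p" and "p \<le> n"
    and "x \<in> U n" and "x \<in> ebar_sub (delta_p n p)"
    and "y \<in> ebar_sub (gen_ideal n p)"
  shows "x + y \<in> U n \<and> f n (x + y) = f n x + dir_deriv (f n) x y"

proof -
  note A = assms
  obtain x0 x1 where xx: "x = (x0, x1)" by (cases x)
  obtain y0 y1 where yy: "y = (y0, y1)" by (cases y)
  have xe: "x \<in> ebar n" using A(5,8,11) unfolding open_subfunctor_def by auto
  have hx0: "\<forall>J. p \<in> J \<longrightarrow> x0 J = 0" and hx1: "\<forall>J. p \<in> J \<longrightarrow> x1 J = 0"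
  proof -
    have "\<exists>(N::nat) d e. (\<forall>i<N. d i \<in> delta_p n p \<and> gr_even (d i)) \<and> x0 = (\<lambda>J. \<Sum>i<N. d i J *\<^sub>R e i)"
      using A(12) unfolding ebar_sub_def xx by blast
    then obtain N :: nat and d e where "\<forall>i<N. d i \<in> delta_p n p" "x0 = (\<lambda>J. \<Sum>i<N. d i J *\<^sub>R e i)"
      by blast
    note de = this
    show "\<forall>J. p \<in> J \<longrightarrow> x0 J = 0"
    proof (intro allI impI)
      fix J assume pJ: "p \<in> J"
      show "x0 J = 0"
      proof (rule ccontr)
        assume "x0 J \<noteq> 0"
        then obtain i where i: "i < N" "d i J \<noteq> 0" using sum_nz[where N=N and d=d and e=e and J=J] de(2) by auto
        then have "d i \<in> delta_p n p" using de(1) by auto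
        then have "d i J = 0" using pJ unfolding delta_p_def by auto
        with i show False by simp
      qed
    qed
    have "\<exists>(N::nat) d e. (\<forall>i<N. d i \<in> delta_p n p \<and> gr_odd (d i)) \<and> x1 = (\<lambda>J. \<Sum>i<N. d i J *\<^sub>R e i)"
      using A(12) unfolding ebar_sub_def xx by blast
    then obtain N :: nat and d e where "\<forall>i<N. d i \<in> delta_p n p" "x1 = (\<lambda>J. \<Sum>i<N. d i J *\<^sub>R e i)"
      by blast
    note de = this
    show "\<forall>J. p \<in> J \<longrightarrow> x1 J = 0"
    proof (intro allI impI)
      fix J assume pJ: "p \<in> J"
      show "x1 J = 0"
      proof (rule ccontr)
        assume "x1 J \<noteq> 0"
        then obtain i where i: "i < N" "d i J \<noteq> 0" using sum_nz[where N=N and d=d and e=e and J=J] de(2) by auto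
        then have "d i \<in> delta_p n p" using de(1) by auto
        then have "d i J = 0" using pJ unfolding delta_p_def by auto
        with i show False by simp
      qed
    qed
  qed
  have hy0: "\<forall>J. y0 J \<noteq> 0 \<longrightarrow> p \<in> J \<and> J \<subseteq> {1..n} \<and> even (card J)"
  proof -
    have "\<exists>(N::nat) d e. (\<forall>i<N. d i \<in> gen_ideal n p \<and> gr_even (d i)) \<and> y0 = (\<lambda>J. \<Sum>i<N. d i J *\<^sub>R e i)"
      using A(13) unfolding ebar_sub_def yy by blast
    then obtain N :: nat and d e where de: "\<forall>i<N. d i \<in> gen_ideal n p \<and> gr_even (d i)" "y0 = (\<lambda>J. \<Sum>i<N. d i J *\<^sub>R e i)"
      by blast
    show ?thesis
    proof (intro allI impI)
      fix J assume "y0 J \<noteq> 0"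
      then obtain i where i: "i < N" "d i J \<noteq> 0" using sum_nz[where N=N and d=d and e=e and J=J] de(2) by auto
      then obtain a where "a \<in> gr_alg n" "d i = gr_mult (gr_basis {p}) a" using de(1) unfolding gen_ideal_def by auto
      then have "p \<in> J \<and> J \<subseteq> {1..n}" using gm_nz[of a n p J] A(9,10) i by auto
      moreover have "even (card J)" using de(1) i unfolding gr_even_def by auto
      ultimately show "p \<in> J \<and> J \<subseteq> {1..n} \<and> even (card J)" by auto
    qed
  qed
  have hy1: "\<forall>J. y1 J \<noteq> 0 \<longrightarrow> p \<in> J \<and> J \<subseteq> {1..n} \<and> odd (card J)"
  proof -
    have "\<exists>(N::nat) d e. (\<forall>i<N. d i \<in> gen_ideal n p \<and> gr_odd (d i)) \<and> y1 = (\<lambda>J. \<Sum>i<N. d i J *\<^sub>R e i)"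
      using A(13) unfolding ebar_sub_def yy by blast
    then obtain N :: nat and d e where de: "\<forall>i<N. d i \<in> gen_ideal n p \<and> gr_odd (d i)" "y1 = (\<lambda>J. \<Sum>i<N. d i J *\<^sub>R e i)"
      by blast
    show ?thesis
    proof (intro allI impI)
      fix J assume "y1 J \<noteq> 0"
      then obtain i where i: "i < N" "d i J \<noteq> 0" using sum_nz[where N=N and d=d and e=e and J=J] de(2) by auto
      then obtain a where "a \<in> gr_alg n" "d i = gr_mult (gr_basis {p}) a" using de(1) unfolding gen_ideal_def by auto
      then have "p \<in> J \<and> J \<subseteq> {1..n}" using gm_nz[of a n p J] A(9,10) i by auto
      moreover have "odd (card J)" using de(1) i unfolding gr_odd_def by auto
      ultimately show "p \<in> J \<and> J \<subseteq> {1..n} \<and> odd (card J)" by auto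
    qed
  qed
  have ye: "y \<in> ebar n" using hy0 hy1 unfolding yy ebar_def by auto
  define X where "X = (\<lambda>t::real. x + t *\<^sub>R y)"
  have Xe: "X s \<in> ebar n" for s unfolding X_def by (rule ebar_lin[OF xe ye])
  have Xmap: "ebar_map n (scl p t) (X s) = X (t * s)" for t s
  proof -
    have "ebar_map n (scl p t) (X s) = (rs p t (fst (X s)), rs p t (snd (X s)))"
      by (rule ebar_map_scl[OF Xe])
    also have "\<dots> = X (t * s)"
      unfolding X_def xx yy using hx0 hx1 hy0 hy1
      by (auto simp: rs_def plus_fun_def scaleR_fun_def fun_eq_iff)
    finally show ?thesis .
  qed
  have sub: "ebar_map m \<rho> ` U m \<subseteq> U n'" if "enat m \<le> k" "enat n' \<le> k" "gr_morph m n' \<rho>" for m n' \<rho>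
    using A(5) that unfolding open_subfunctor_def by blast
  have Uinv: "X (t * s) \<in> U n" if "X s \<in> U n" for s t
  proof -
    have "ebar_map n (scl p t) (X s) \<in> U n" using sub[OF A(8) A(8) scl_morph[of n p t]] that by blast
    then show ?thesis using Xmap[of t s] by simp
  qed
  have "openin (top_of_set (ebar n)) (U n)" using A(5,8) unfolding open_subfunctor_def by blast
  then obtain T where T: "open T" "U n = ebar n \<inter> T"
    unfolding openin_open by blast
  have "continuous_on UNIV X"
  proof -
    have "X = (\<lambda>t. (x0 + t *\<^sub>R y0, x1 + t *\<^sub>R y1))" unfolding X_def xx yy by (auto simp: fun_eq_iff)
    moreover have "continuous_on UNIV (\<lambda>t::real. (x0 + t *\<^sub>R y0, x1 + t *\<^sub>R y1))"
      by (intro continuous_on_Pair lc_line_fun A(1,2))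
    ultimately show ?thesis by simp
  qed
  then have "open (X -` T)" using T(1) by (simp add: continuous_on_open_vimage)
  moreover have X0: "X 0 = x" unfolding X_def by simp
  moreover have "0 \<in> X -` T" using X0 A(11) T(2) by auto
  ultimately obtain e where e: "e > 0" "ball 0 e \<subseteq> X -` T" by (meson open_contains_ball_eq)
  define s where "s = e / 2"
  have "s \<in> ball 0 e" "s \<noteq> 0" using e(1) unfolding s_def by auto
  then have "X s \<in> U n" using e(2) T(2) Xe by auto
  then have "X ((1/s) * s) \<in> U n" by (rule Uinv)
  then have X1: "X 1 \<in> U n" using \<open>s \<noteq> 0\<close> by simp
  have XU: "x + y \<in> U n" using X1 unfolding X_def by simp
  define w where "w = f n (X 1)"
  have we: "w \<in> ebar n" using A(6,8) X1 unfolding natural_transf_def w_def by auto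
  define Af where "Af = (rs p 0 (fst w), rs p 0 (snd w))"
  define Bf where "Bf = ((\<lambda>J. if p \<in> J then fst w J else 0), (\<lambda>J. if p \<in> J then snd w J else 0))"
  have fX: "f n (X t) = Af + t *\<^sub>R Bf" for t
  proof -
    have "f n (X t) = f n (ebar_map n (scl p t) (X 1))" using Xmap[of t 1] by simp
    also have "\<dots> = ebar_map n (scl p t) w"
      using A(6,8) X1 scl_morph[of n p t] unfolding natural_transf_def w_def by blast
    also have "\<dots> = (rs p t (fst w), rs p t (snd w))" by (rule ebar_map_scl[OF we])
    also have "\<dots> = Af + t *\<^sub>R Bf" unfolding Af_def Bf_def
      by (subst (1 2) rs_split) simp
    finally show ?thesis .
  qed
  have fx: "f n x = Af" using fX[of 0] X0 by simp
  have lim: "((\<lambda>t. (1 / t) *\<^sub>R (f n (x + t *\<^sub>R y) - f n x)) \<longlongrightarrow> Bf) (at (0::real))"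
  proof -
    have "eventually (\<lambda>t. (1 / t) *\<^sub>R (f n (x + t *\<^sub>R y) - f n x) = Bf) (at (0::real))"
      unfolding eventually_at_filter
      by (rule always_eventually) (auto simp: fX[unfolded X_def] fx)
    then show ?thesis by (rule tendsto_eventually)
  qed
  have dd: "dir_deriv (f n) x y = Bf"
    unfolding dir_deriv_def
  proof (rule the_equality)
    show "((\<lambda>t. (1 / t) *\<^sub>R (f n (x + t *\<^sub>R y) - f n x)) \<longlongrightarrow> Bf) (at (0::real))" by (rule lim)
    fix L assume "((\<lambda>t. (1 / t) *\<^sub>R (f n (x + t *\<^sub>R y) - f n x)) \<longlongrightarrow> L) (at (0::real))"
    then show "L = Bf" using sbar_tendsto_unique lim trivial_limit_at by blast
  qed
  have "f n (x + y) = f n x + dir_deriv (f n) x y"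
    using fX[of 1] fx dd unfolding X_def by simp
  with XU show ?thesis by simp
qed

end
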